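(* For $d=4$ the set $A(\sigma_\bullet,(2,0))$ is connected, and for $d=5$ the set $A(\sigma_\bullet,(2,1))$ is connected.
   Context: Identify a monic real polynomial $Q_d=x^d+\sum_{j=0}^{d-1}a_jx^j$ with its coefficient vector $(a_{d-1},\ldots,a_0)\in\mathbb{R}^d$. $\sigma_\bullet=(+,-,+,+,\ldots,+,+,-,+)$ denotes the sign pattern of length $d+1$ in which the coefficients of $x^{d-1}$ and $x^1$ are negative and all other coefficients are positive; for $d=4$ it is $(+,-,+,-,+)$ and for $d=5$ it is $(+,-,+,+,-,+)$. $A(\sigma_\bullet,(2,d-4))$ is the set of monic degree-$d$ polynomials with all coefficients non-zero with signs given by $\sigma_\bullet$ (i.e. $\operatorname{sign}(a_j)$ equals the entry of $\sigma_\bullet$ corresponding to $x^j$), having exactly two positive and exactly $d-4$ negative roots, all real roots simple, and exactly one pair of complex conjugate non-real roots. *)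

theory Defs
  imports "HOL-Analysis.Analysis" "HOL-Computational_Algebra.Polynomial"
begin

definition sigma_bullet :: "nat \<Rightarrow> nat \<Rightarrow> real" where
  "sigma_bullet d j = (if j = d - 1 \<or> j = 1 then -1 else 1)"

definition A_set :: "nat \<Rightarrow> (nat \<Rightarrow> real) \<Rightarrow> nat \<Rightarrow> nat \<Rightarrow> real poly set" where
  "A_set d \<sigma> pos neg = {p. degree p = d \<and> lead_coeff p = 1
     \<and> (\<forall>j\<le>d. sgn (coeff p j) = \<sigma> j)
     \<and> card {x::real. x > 0 \<and> poly p x = 0} = pos
     \<and> card {x::real. x < 0 \<and> poly p x = 0} = neg
     \<and> (\<forall>x::real. poly p x = 0 \<longrightarrow> order x p = 1)
     \<and> card {z::complex. Im z \<noteq> 0 \<and> poly (map_poly complex_of_real p) z = 0} = 2}"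

end

theory Submission
  imports Defs
begin

lemma quad_pos:
  fixes p q x :: real
  assumes "p^2 < 4*q" shows "x^2 + p*x + q > 0"
proof -
  have e: "x^2+p*x+q = ((2*x+p)^2 + (4*q - p^2))/4" by (simp add: algebra_simps power2_eq_square)
  moreover have "(2*x+p)^2 + (4*q - p^2) > 0" using assms
    by (metis add_nonneg_pos diff_gt_0_iff_gt zero_le_power2)
  then show ?thesis by (subst e) simp
qed

lemma complex_quad_card:
  fixes p q :: real
  assumes "p^2 < 4*q"
  shows "card {z::complex. Im z \<noteq> 0 \<and> z^2 + of_real p * z + of_real q = 0} = 2"
proof -
  define w where "w = sqrt (4*q - p^2) / 2"
  have wpos: "w > 0" using assms by (simp add: w_def)
  have w2: "w^2 = (4*q - p^2)/4" using assms
    by (simp add: w_def power_divide)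
  have "{z::complex. Im z \<noteq> 0 \<and> z^2 + of_real p * z + of_real q = 0}
        = {Complex (-p/2) w, Complex (-p/2) (-w)}"
  proof (intro set_eqI iffI)
    fix z :: complex
    assume "z \<in> {z::complex. Im z \<noteq> 0 \<and> z^2 + of_real p * z + of_real q = 0}"
    then have ne: "Im z \<noteq> 0" and eq: "z^2 + of_real p * z + of_real q = 0" by auto
    have re: "Re z * Re z - Im z * Im z + p * Re z + q = 0"
      using arg_cong[OF eq, of Re] by (simp add: power2_eq_square)
    have im: "2 * Re z * Im z + p * Im z = 0"
      using arg_cong[OF eq, of Im] by (simp add: power2_eq_square algebra_simps)
    have "(2 * Re z + p) * Im z = 0" using im by (simp add: algebra_simps)
    then have x: "Re z = -p/2" using ne by simp
    have "(Im z)^2 = w^2" using re x w2 by (simp add: power2_eq_square field_simps) 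
    then have "Im z = w \<or> Im z = -w" by (simp add: power2_eq_iff)
    then show "z \<in> {Complex (-p/2) w, Complex (-p/2) (-w)}"
      using x by (auto simp: complex_eq_iff)
  next
    fix z :: complex
    assume "z \<in> {Complex (-p/2) w, Complex (-p/2) (-w)}"
    then have "z = Complex (-p/2) w \<or> z = Complex (-p/2) (-w)" by simp
    moreover have "w * w = (4*q - p^2)/4" using w2 by (simp add: power2_eq_square)
    ultimately show "z \<in> {z::complex. Im z \<noteq> 0 \<and> z^2 + of_real p * z + of_real q = 0}"
    proof (elim disjE)
      assume z: "z = Complex (-p/2) w" and ww: "w * w = (4*q - p^2)/4"
      show ?thesis unfolding z using wpos ww
        by (simp add: complex_eq_iff power2_eq_square field_simps)
    next
      assume z: "z = Complex (-p/2) (-w)" and ww: "w * w = (4*q - p^2)/4"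
      show ?thesis unfolding z using wpos ww
        by (simp add: complex_eq_iff power2_eq_square field_simps)
    qed
  qed
  moreover have "Complex (-p/2) w \<noteq> Complex (-p/2) (-w)" using wpos by simp
  ultimately show ?thesis by simp
qed

lemma expand5:
  "[:-a,1:]*[:-b,1:]*[:c,1:]*[:q,p,1::'a::comm_ring_1:] =
  [: a*b*c*q, (a*b-(a+b)*c)*q + a*b*c*p, (c-(a+b))*q + (a*b-(a+b)*c)*p + a*b*c,
     q + (c-(a+b))*p + a*b - (a+b)*c, p + c - (a+b), 1:]"
  by (simp add: algebra_simps)

lemma expand4:
  "[:-a,1:]*[:-b,1:]*[:q,p,1::'a::comm_ring_1:] =
  [: a*b*q, a*b*p - (a+b)*q, q - (a+b)*p + a*b, p - (a+b), 1:]"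
  by (simp add: algebra_simps)

lemma order_lin_self: "order a [:-a, 1::real:] = 1"
  using order_power_n_n[of a 1] by simp

lemma order_lin_other: "x \<noteq> a \<Longrightarrow> order x [:-a, 1::real:] = 0"
  by (rule order_0I) simp

lemma order_linp_other: "x \<noteq> -c \<Longrightarrow> order x [:c, 1::real:] = 0"
  by (rule order_0I) (auto simp: add_eq_0_iff2)

lemma order_linp_self: "order (-c) [:c, 1::real:] = 1"
  using order_lin_self[of "-c"] by simp

lemma roots5:
  fixes a b c p q :: real
  assumes ab: "0<a" "a<b" "0<c" "p^2<4*q"
  assumes P_def: "P = [:-a,1:]*[:-b,1:]*[:c,1:]*[:q,p,1:]"
  shows "{x. 0 < x \<and> poly P x = 0} = {a,b}"
    and "{x. x < 0 \<and> poly P x = 0} = {-c}"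
    and "\<forall>x. poly P x = 0 \<longrightarrow> order x P = 1"
    and "card {z. Im z \<noteq> 0 \<and> poly (map_poly complex_of_real P) z = 0} = 2"
proof -
  have pv: "poly P x = (x-a)*(x-b)*(x+c)*(x^2+p*x+q)" for x
    unfolding P_def poly_mult by (simp add: algebra_simps power2_eq_square)
  have qp: "x^2+p*x+q \<noteq> 0" for x using quad_pos[OF ab(4), of x] by simp
  have rt: "poly P x = 0 \<longleftrightarrow> x = a \<or> x = b \<or> x = -c" for x
    using qp[of x] by (simp add: pv add_eq_0_iff2)
  show "{x. 0 < x \<and> poly P x = 0} = {a,b}" using rt ab by auto
  show "{x. x < 0 \<and> poly P x = 0} = {-c}" using rt ab by auto
  show "\<forall>x. poly P x = 0 \<longrightarrow> order x P = 1"
  proof (intro allI impI)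
    fix x assume "poly P x = 0"
    then have x: "x = a \<or> x = b \<or> x = -c" using rt by simp
    have nz: "[:-a,1::real:] \<noteq> 0" "[:-b,1::real:] \<noteq> 0" "[:c,1::real:] \<noteq> 0" "[:q,p,1::real:] \<noteq> 0"
      by auto
    have o: "order x P = order x [:-a,1:] + order x [:-b,1:] + order x [:-(-c),1:] + order x [:q,p,1:]"
      unfolding P_def minus_minus by (simp only: order_mult mult_eq_0_iff nz simp_thms)
    have oq: "order x [:q,p,1:] = 0"
      by (rule order_0I) (use qp[of x] in \<open>simp add: algebra_simps power2_eq_square\<close>)
    have o2: "order x P = order x [:-a,1:] + order x [:-b,1:] + order x [:c,1:]"
      using o oq by simp
    show "order x P = 1" using x
    proof (elim disjE)
      assume xa: "x = a"
      have "a \<noteq> b" "a \<noteq> -c" using ab by auto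
      then show ?thesis unfolding xa using o2[unfolded xa]
        using order_lin_self[of a] order_lin_other[of a b] order_linp_other[of a c] by linarith
    next
      assume xa: "x = b"
      have "b \<noteq> a" "b \<noteq> -c" using ab by auto
      then show ?thesis unfolding xa using o2[unfolded xa]
        using order_lin_self[of b] order_lin_other[of b a] order_linp_other[of b c] by linarith
    next
      assume xa: "x = -c"
      have "-c \<noteq> a" "-c \<noteq> b" using ab by auto
      then show ?thesis unfolding xa using o2[unfolded xa]
        using order_linp_self[of c] order_lin_other[of "-c" a] order_lin_other[of "-c" b] by linarith
    qed
  qed
  have cv: "poly (map_poly complex_of_real P) z = (z - of_real a)*(z - of_real b)*(z + of_real c)*(z^2 + of_real p * z + of_real q)" for z
  proof -
    have "map_poly complex_of_real P = [:-of_real a,1:]*[:-of_real b,1:]*[:of_real c,1:]*[:of_real q, of_real p,1:]"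
      unfolding P_def expand5 by (simp add: map_poly_pCons)
    then show ?thesis unfolding poly_mult by (simp add: algebra_simps power2_eq_square)
  qed
  have "{z. Im z \<noteq> 0 \<and> poly (map_poly complex_of_real P) z = 0} =
        {z::complex. Im z \<noteq> 0 \<and> z^2 + of_real p * z + of_real q = 0}"
  proof -
    have "Im z \<noteq> 0 \<Longrightarrow> z - of_real r \<noteq> 0" for z r by auto
    moreover have "Im z \<noteq> 0 \<Longrightarrow> z + of_real r \<noteq> 0" for z r
      by (auto simp: complex_eq_iff)
    ultimately show ?thesis unfolding cv by auto
  qed
  then show "card {z. Im z \<noteq> 0 \<and> poly (map_poly complex_of_real P) z = 0} = 2"
    using complex_quad_card[OF ab(4)] by simp
qed

lemma e5: "(\<forall>j\<le>(5::nat). P j) \<longleftrightarrow> P 0 \<and> P 1 \<and> P 2 \<and> P 3 \<and> P 4 \<and> P 5"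
proof -
  have "{..(5::nat)} = {0,1,2,3,4,5}" by auto
  then have "(\<forall>j\<le>(5::nat). P j) \<longleftrightarrow> (\<forall>j\<in>{0,1,2,3,4,5::nat}. P j)" by (metis atMost_iff)
  then show ?thesis by simp
qed
lemma sgn5: "(\<forall>j\<le>5. sgn (coeff [:a0,a1,a2,a3,a4,1::real:] j) = sigma_bullet 5 j)
   \<longleftrightarrow> a4<0 \<and> 0<a3 \<and> 0<a2 \<and> a1<0 \<and> 0<a0"
  unfolding e5 by (simp add: sigma_bullet_def sgn_if numeral_eq_Suc)
lemma e4: "(\<forall>j\<le>(4::nat). P j) \<longleftrightarrow> P 0 \<and> P 1 \<and> P 2 \<and> P 3 \<and> P 4"
proof -
  have "{..(4::nat)} = {0,1,2,3,4}" by auto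
  then have "(\<forall>j\<le>(4::nat). P j) \<longleftrightarrow> (\<forall>j\<in>{0,1,2,3,4::nat}. P j)" by (metis atMost_iff)
  then show ?thesis by simp
qed
lemma sgn4: "(\<forall>j\<le>4. sgn (coeff [:a0,a1,a2,a3,1::real:] j) = sigma_bullet 4 j)
   \<longleftrightarrow> a3<0 \<and> 0<a2 \<and> a1<0 \<and> 0<a0"
  unfolding e4 by (simp add: sigma_bullet_def sgn_if numeral_eq_Suc)
lemma deg_le2:
  fixes R :: "real poly"
  assumes "degree R = 2" "coeff R 2 = 1"
  shows "R = [:coeff R 0, coeff R 1, 1:]"
proof (rule poly_eqI)
  fix n
  show "coeff R n = coeff [:coeff R 0, coeff R 1, 1:] n"
  proof (cases "n \<le> 2")
    case True then have "n = 0 \<or> n = 1 \<or> n = 2" by auto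
    then show ?thesis using assms by (auto simp: numeral_eq_Suc)
  next
    case False
    have "degree [:coeff R 0, coeff R 1, 1::real:] = 2" by simp
    then show ?thesis using False assms by (simp add: coeff_eq_0)
  qed
qed

lemma roots4:
  fixes a b p q :: real
  assumes ab: "0<a" "a<b" "p^2<4*q"
  assumes P_def: "P = [:-a,1:]*[:-b,1:]*[:q,p,1:]"
  shows "{x. 0 < x \<and> poly P x = 0} = {a,b}"
    and "{x. x < 0 \<and> poly P x = 0} = {}"
    and "\<forall>x. poly P x = 0 \<longrightarrow> order x P = 1"
    and "card {z. Im z \<noteq> 0 \<and> poly (map_poly complex_of_real P) z = 0} = 2"
proof -
  have pv: "poly P x = (x-a)*(x-b)*(x^2+p*x+q)" for x
    unfolding P_def poly_mult by (simp add: algebra_simps power2_eq_square)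
  have qp: "x^2+p*x+q \<noteq> 0" for x using quad_pos[OF ab(3), of x] by simp
  have rt: "poly P x = 0 \<longleftrightarrow> x = a \<or> x = b" for x
    using qp[of x] by (simp add: pv)
  show "{x. 0 < x \<and> poly P x = 0} = {a,b}" using rt ab by auto
  show "{x. x < 0 \<and> poly P x = 0} = {}" using rt ab by auto
  show "\<forall>x. poly P x = 0 \<longrightarrow> order x P = 1"
  proof (intro allI impI)
    fix x assume "poly P x = 0"
    then have x: "x = a \<or> x = b" using rt by simp
    have nz: "[:-a,1::real:] \<noteq> 0" "[:-b,1::real:] \<noteq> 0" "[:q,p,1::real:] \<noteq> 0"
      by auto
    have o: "order x P = order x [:-a,1:] + order x [:-b,1:] + order x [:q,p,1:]"
      unfolding P_def by (simp only: order_mult mult_eq_0_iff nz simp_thms)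
    have oq: "order x [:q,p,1:] = 0"
      by (rule order_0I) (use qp[of x] in \<open>simp add: algebra_simps power2_eq_square\<close>)
    have o2: "order x P = order x [:-a,1:] + order x [:-b,1:]"
      using o oq by linarith
    show "order x P = 1" using x
    proof (elim disjE)
      assume xa: "x = a"
      have "a \<noteq> b" using ab by auto
      then show ?thesis unfolding xa using o2[unfolded xa]
        using order_lin_self[of a] order_lin_other[of a b] by linarith
    next
      assume xa: "x = b"
      have "b \<noteq> a" using ab by auto
      then show ?thesis unfolding xa using o2[unfolded xa]
        using order_lin_self[of b] order_lin_other[of b a] by linarith
    qed
  qed
  have cv: "poly (map_poly complex_of_real P) z = (z - of_real a)*(z - of_real b)*(z^2 + of_real p * z + of_real q)" for z
  proof -
    have "map_poly complex_of_real P = [:-of_real a,1:]*[:-of_real b,1:]*[:of_real q, of_real p,1:]"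
      unfolding P_def expand4 by (simp add: map_poly_pCons)
    then show ?thesis unfolding poly_mult by (simp add: algebra_simps power2_eq_square)
  qed
  have "{z. Im z \<noteq> 0 \<and> poly (map_poly complex_of_real P) z = 0} =
        {z::complex. Im z \<noteq> 0 \<and> z^2 + of_real p * z + of_real q = 0}"
  proof -
    have "Im z \<noteq> 0 \<Longrightarrow> z - of_real r \<noteq> 0" for z r by auto
    then show ?thesis unfolding cv by auto
  qed
  then show "card {z. Im z \<noteq> 0 \<and> poly (map_poly complex_of_real P) z = 0} = 2"
    using complex_quad_card[OF ab(3)] by simp
qed

lemma real_quad_root:
  fixes p q :: real
  assumes "\<not> p^2 < 4*q"
  obtains r where "r^2 + p*r + q = 0"
proof -
  define s where "s = sqrt (p^2 - 4*q)"
  have s2: "s^2 = p^2 - 4*q" using assms by (simp add: s_def)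
  have "((s-p)/2)^2 + p*((s-p)/2) + q = 0"
    using s2 by (simp add: power2_eq_square field_simps)
  then show ?thesis using that by blast
qed

lemma order_ge2:
  fixes F G :: "real poly"
  assumes "F * G \<noteq> 0" "poly F r = 0" "poly G r = 0"
  shows "order r (F*G) \<ge> 2"
proof -
  have "F \<noteq> 0" "G \<noteq> 0" using assms(1) by auto
  then have "order r F \<noteq> 0" "order r G \<noteq> 0" using assms order_root by blast+
  then show ?thesis using order_mult[OF assms(1), of r] by linarith
qed


definition cf5 :: "real \<Rightarrow> real \<Rightarrow> real \<Rightarrow> real \<Rightarrow> real \<Rightarrow> real\<times>real\<times>real\<times>real\<times>real" where
  "cf5 a b c p q = (p + c - (a+b), q + (c-(a+b))*p + a*b - (a+b)*c,
     (c-(a+b))*q + (a*b-(a+b)*c)*p + a*b*c, (a*b-(a+b)*c)*q + a*b*c*p, a*b*c*q)"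

lemma hard5:
  assumes PA: "[:a0,a1,a2,a3,a4,1:] \<in> A_set 5 (sigma_bullet 5) 2 1"
  shows "\<exists>a b c p q. 0<a \<and> a<b \<and> 0<c \<and> p^2 < 4*q \<and> (a4,a3,a2,a1,a0) = cf5 a b c p q"
proof -
  define P where "P = [:a0,a1,a2,a3,a4,1::real:]"
  have Pn: "P \<noteq> 0" unfolding P_def by simp
  have degP: "degree P = 5" unfolding P_def by simp
  from PA have sg: "\<forall>j\<le>5. sgn (coeff P j) = sigma_bullet 5 j"
    and cpos: "card {x. 0 < x \<and> poly P x = 0} = 2"
    and cneg: "card {x. x < 0 \<and> poly P x = 0} = 1"
    and ord: "\<forall>x. poly P x = 0 \<longrightarrow> order x P = 1"
    unfolding A_set_def P_def by auto
  have a0p: "0 < a0" using sg unfolding P_def sgn5 by simp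
  from cpos obtain u v where uv: "{x. 0 < x \<and> poly P x = 0} = {u,v}" "u \<noteq> v"
    unfolding card_2_iff by blast
  define a where "a = min u v"
  define b where "b = max u v"
  have posset: "{x. 0 < x \<and> poly P x = 0} = {a,b}" using uv unfolding a_def b_def
    by (cases "u \<le> v") (auto simp: min_def max_def)
  have ab: "a < b" using uv(2) unfolding a_def b_def by auto
  have a: "0 < a" "poly P a = 0" using posset by blast+
  have b: "0 < b" "poly P b = 0" using posset by blast+
  from cneg obtain m where mset: "{x. x < 0 \<and> poly P x = 0} = {m}"
    unfolding One_nat_def card_1_singleton_iff by blast
  have m: "m < 0" "poly P m = 0" using mset by blast+
  define c where "c = -m"
  have c: "0 < c" using m by (simp add: c_def)
  obtain P1 where P1: "P = [:-a,1:] * P1" using a(2) poly_eq_0_iff_dvd by (metis dvdE)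
  have "poly P1 b = 0" using b(2) ab unfolding P1 by simp
  then obtain P2 where P2: "P1 = [:-b,1:] * P2" using poly_eq_0_iff_dvd by (metis dvdE)
  have "poly P2 m = 0" using m(2) ab a b m unfolding P1 P2 by simp
  then obtain R where R: "P2 = [:-m,1:] * R" using poly_eq_0_iff_dvd by (metis dvdE)
  have mc: "[:-m,1::real:] = [:c,1:]" by (simp add: c_def)
  define F where "F = [:-a,1:]*[:-b,1:]*[:c,1::real:]"
  have PFR: "P = F * R" unfolding F_def P1 P2 R mc by (simp only: mult.assoc)
  have Rn: "R \<noteq> 0" using Pn PFR by auto
  have Fn: "F \<noteq> 0" unfolding F_def by simp
  have degF: "degree F = 3" unfolding F_def by (simp add: degree_mult_eq)
  have degR: "degree R = 2" using degP PFR degree_mult_eq[OF Fn Rn] degF by simp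
  have lcF: "lead_coeff F = 1" unfolding F_def by (simp add: lead_coeff_mult)
  have "lead_coeff P = 1" unfolding P_def by simp
  then have lcR: "coeff R 2 = 1" using PFR lcF degR by (simp add: lead_coeff_mult)
  define p where "p = coeff R 1"
  define q where "q = coeff R 0"
  have Rpq: "R = [:q,p,1:]" unfolding p_def q_def using deg_le2[OF degR lcR] .
  have Pprod: "P = [:-a,1:]*[:-b,1:]*[:c,1:]*[:q,p,1:]" using PFR unfolding F_def Rpq .
  have coefs: "(a4,a3,a2,a1,a0) = cf5 a b c p q"
    using Pprod unfolding P_def expand5 cf5_def by simp
  have disc: "p^2 < 4*q"
  proof (rule ccontr)
    assume "\<not> p^2 < 4*q"
    then obtain r where r: "r^2 + p*r + q = 0" by (rule real_quad_root)
    have pr: "poly R r = 0" unfolding Rpq using r by (simp add: algebra_simps power2_eq_square)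
    then have prP: "poly P r = 0" unfolding PFR by simp
    have "r \<noteq> 0"
    proof
      assume "r = 0"
      then have "q = 0" using r by simp
      then have "a0 = 0" using coefs unfolding cf5_def by simp
      then show False using a0p by simp
    qed
    then have "r \<in> {a,b} \<or> r \<in> {m}" using prP posset mset
      by (metis (mono_tags, lifting) linorder_neqE_linordered_idom mem_Collect_eq)
    then have "poly F r = 0" unfolding F_def c_def poly_mult by auto
    then have "order r P \<ge> 2" unfolding PFR using order_ge2[OF _ _ pr] Pn PFR by simp
    then show False using ord prP by simp
  qed
  show ?thesis using a(1) ab c disc coefs by blast
qed


definition cf4 :: "real \<Rightarrow> real \<Rightarrow> real \<Rightarrow> real \<Rightarrow> real\<times>real\<times>real\<times>real" where
  "cf4 a b p q = (p - (a+b), q - (a+b)*p + a*b, a*b*p - (a+b)*q, a*b*q)"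

lemma hard4:
  assumes PA: "[:a0,a1,a2,a3,1:] \<in> A_set 4 (sigma_bullet 4) 2 0"
  shows "\<exists>a b p q. 0<a \<and> a<b \<and> p^2 < 4*q \<and> (a3,a2,a1,a0) = cf4 a b p q"
proof -
  define P where "P = [:a0,a1,a2,a3,1::real:]"
  have Pn: "P \<noteq> 0" unfolding P_def by simp
  have degP: "degree P = 4" unfolding P_def by simp
  from PA have sg: "\<forall>j\<le>4. sgn (coeff P j) = sigma_bullet 4 j"
    and cpos: "card {x. 0 < x \<and> poly P x = 0} = 2"
    and cneg: "card {x. x < 0 \<and> poly P x = 0} = 0"
    and ord: "\<forall>x. poly P x = 0 \<longrightarrow> order x P = 1"
    unfolding A_set_def P_def by auto
  have a0p: "0 < a0" using sg unfolding P_def sgn4 by simp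
  have fin: "finite {x. x < 0 \<and> poly P x = 0}"
    using poly_roots_finite[OF Pn] by (rule rev_finite_subset) auto
  have negset: "{x. x < 0 \<and> poly P x = 0} = {}" using cneg fin by simp
  from cpos obtain u v where uv: "{x. 0 < x \<and> poly P x = 0} = {u,v}" "u \<noteq> v"
    unfolding card_2_iff by blast
  define a where "a = min u v"
  define b where "b = max u v"
  have posset: "{x. 0 < x \<and> poly P x = 0} = {a,b}" using uv unfolding a_def b_def
    by (cases "u \<le> v") (auto simp: min_def max_def)
  have ab: "a < b" using uv(2) unfolding a_def b_def by auto
  have a: "0 < a" "poly P a = 0" using posset by blast+
  have b: "0 < b" "poly P b = 0" using posset by blast+
  obtain P1 where P1: "P = [:-a,1:] * P1" using a(2) poly_eq_0_iff_dvd by (metis dvdE)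
  have "poly P1 b = 0" using b(2) ab unfolding P1 by simp
  then obtain R where R: "P1 = [:-b,1:] * R" using poly_eq_0_iff_dvd by (metis dvdE)
  define F where "F = [:-a,1:]*[:-b,1::real:]"
  have PFR: "P = F * R" unfolding F_def P1 R by (simp only: mult.assoc)
  have Rn: "R \<noteq> 0" using Pn PFR by auto
  have Fn: "F \<noteq> 0" unfolding F_def by simp
  have degF: "degree F = 2" unfolding F_def by (simp add: degree_mult_eq)
  have degR: "degree R = 2" using degP PFR degree_mult_eq[OF Fn Rn] degF by simp
  have lcF: "lead_coeff F = 1" unfolding F_def by (simp add: lead_coeff_mult)
  have "lead_coeff P = 1" unfolding P_def by simp
  then have lcR: "coeff R 2 = 1" using PFR lcF degR by (simp add: lead_coeff_mult)
  define p where "p = coeff R 1"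
  define q where "q = coeff R 0"
  have Rpq: "R = [:q,p,1:]" unfolding p_def q_def using deg_le2[OF degR lcR] .
  have Pprod: "P = [:-a,1:]*[:-b,1:]*[:q,p,1:]" using PFR unfolding F_def Rpq .
  have coefs: "(a3,a2,a1,a0) = cf4 a b p q"
    using Pprod unfolding P_def expand4 cf4_def by simp
  have disc: "p^2 < 4*q"
  proof (rule ccontr)
    assume "\<not> p^2 < 4*q"
    then obtain r where r: "r^2 + p*r + q = 0" by (rule real_quad_root)
    have pr: "poly R r = 0" unfolding Rpq using r by (simp add: algebra_simps power2_eq_square)
    then have prP: "poly P r = 0" unfolding PFR by simp
    have "r \<noteq> 0"
    proof
      assume "r = 0"
      then have "q = 0" using r by simp
      then have "a0 = 0" using coefs unfolding cf4_def by simp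
      then show False using a0p by simp
    qed
    then have "r \<in> {a,b}" using prP posset negset
      by (metis (mono_tags, lifting) empty_iff linorder_neqE_linordered_idom mem_Collect_eq)
    then have "poly F r = 0" unfolding F_def poly_mult by auto
    then have "order r P \<ge> 2" unfolding PFR using order_ge2[OF _ _ pr] Pn PFR by simp
    then show False using ord prP by simp
  qed
  show ?thesis using a(1) ab disc coefs by blast
qed


definition signs5 :: "real\<times>real\<times>real\<times>real\<times>real \<Rightarrow> bool" where
  "signs5 y = (case y of (a4,a3,a2,a1,a0) \<Rightarrow> a4<0 \<and> 0<a3 \<and> 0<a2 \<and> a1<0 \<and> 0<a0)"

definition signs4 :: "real\<times>real\<times>real\<times>real \<Rightarrow> bool" where
  "signs4 y = (case y of (a3,a2,a1,a0) \<Rightarrow> a3<0 \<and> 0<a2 \<and> a1<0 \<and> 0<a0)"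

lemma easy5:
  assumes ab: "0<a" "a<b" "0<c" "p^2<4*q" and sg: "signs5 (cf5 a b c p q)"
  shows "cf5 a b c p q \<in> {(a4::real, a3::real, a2::real, a1::real, a0::real).
             [:a0, a1, a2, a3, a4, 1:] \<in> A_set 5 (sigma_bullet 5) 2 1}"
proof -
  obtain a4 a3 a2 a1 a0 where y: "cf5 a b c p q = (a4,a3,a2,a1,a0)" by (cases "cf5 a b c p q") 
  have Peq: "[:a0,a1,a2,a3,a4,1:] = [:-a,1:]*[:-b,1:]*[:c,1:]*[:q,p,1:]"
    using y unfolding expand5 cf5_def by simp
  note R = roots5[OF ab Peq]
  have s: "a4<0 \<and> 0<a3 \<and> 0<a2 \<and> a1<0 \<and> 0<a0" using sg unfolding y signs5_def by simp
  have "[:a0,a1,a2,a3,a4,1:] \<in> A_set 5 (sigma_bullet 5) 2 1"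
    unfolding A_set_def mem_Collect_eq
    using R s sgn5[of a0 a1 a2 a3 a4] ab by simp
  then show ?thesis using y by simp
qed

lemma easy4:
  assumes ab: "0<a" "a<b" "p^2<4*q" and sg: "signs4 (cf4 a b p q)"
  shows "cf4 a b p q \<in> {(a3::real, a2::real, a1::real, a0::real).
             [:a0, a1, a2, a3, 1:] \<in> A_set 4 (sigma_bullet 4) 2 0}"
proof -
  obtain a3 a2 a1 a0 where y: "cf4 a b p q = (a3,a2,a1,a0)" by (cases "cf4 a b p q") 
  have Peq: "[:a0,a1,a2,a3,1:] = [:-a,1:]*[:-b,1:]*[:q,p,1:]"
    using y unfolding expand4 cf4_def by simp
  note R = roots4[OF ab Peq]
  have s: "a3<0 \<and> 0<a2 \<and> a1<0 \<and> 0<a0" using sg unfolding y signs4_def by simp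
  have "[:a0,a1,a2,a3,1:] \<in> A_set 4 (sigma_bullet 4) 2 0"
    unfolding A_set_def mem_Collect_eq
  proof (intro conjI)
    show "\<forall>j\<le>4. sgn (coeff [:a0,a1,a2,a3,1:] j) = sigma_bullet 4 j" using s sgn4 by blast
    show "card {x. 0 < x \<and> poly [:a0,a1,a2,a3,1:] x = 0} = 2" unfolding R(1) using ab by simp
    show "card {x. x < 0 \<and> poly [:a0,a1,a2,a3,1:] x = 0} = 0" unfolding R(2) by simp
  qed (use R in simp_all)
  then show ?thesis using y by simp
qed

lemma comb_pos:
  fixes x y t :: real
  assumes "0<x" "0<y" "0\<le>t" "t\<le>1"
  shows "0 < (1-t)*x + t*y"
proof (cases "t < 1")
  case True
  then have "(1-t)*x > 0" using assms by simp
  moreover have "t*y \<ge> 0" using assms by simp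
  ultimately show ?thesis by linarith
next
  case False
  then have "t = 1" using assms by simp
  then show ?thesis using assms by simp
qed

lemma comb_neg:
  fixes x y t :: real
  assumes "x<0" "y<0" "0\<le>t" "t\<le>1"
  shows "(1-t)*x + t*y < 0"
  using comb_pos[of "-x" "-y" t] assms by simp

lemma disc_comb:
  fixes p1 p2 q1 q2 t :: real
  assumes "p1^2 < 4*q1" "p2^2 < 4*q2" "0\<le>t" "t\<le>1"
  shows "((1-t)*p1+t*p2)^2 < 4*((1-t)*q1+t*q2)"
proof -
  have e: "((1-t)*p1+t*p2)^2 = (1-t)*p1^2 + t*p2^2 - t*(1-t)*(p1-p2)^2"
    by (simp add: algebra_simps power2_eq_square)
  have "t*(1-t)*(p1-p2)^2 \<ge> 0" using assms by simp
  moreover have "0 < (1-t)*(4*q1 - p1^2) + t*(4*q2-p2^2)"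
    using comb_pos assms by simp
  moreover have "(1-t)*(4*q1 - p1^2) + t*(4*q2-p2^2) = 4*((1-t)*q1+t*q2) - ((1-t)*p1^2 + t*p2^2)"
    by (simp add: algebra_simps)
  ultimately show ?thesis using e by linarith
qed

lemma signs5_comb:
  assumes "signs5 (cf5 a b c p1 q1)" "signs5 (cf5 a b c p2 q2)" "0\<le>t" "t\<le>1"
  shows "signs5 (cf5 a b c ((1-t)*p1+t*p2) ((1-t)*q1+t*q2))"
proof -
  define p where "p = (1-t)*p1+t*p2"
  define q where "q = (1-t)*q1+t*q2"
  have e1: "p + c - (a+b) = (1-t)*(p1 + c - (a+b)) + t*(p2 + c - (a+b))"
    unfolding p_def by (simp add: algebra_simps)
  have e2: "q + (c-(a+b))*p + a*b - (a+b)*c = (1-t)*(q1 + (c-(a+b))*p1 + a*b - (a+b)*c) + t*(q2 + (c-(a+b))*p2 + a*b - (a+b)*c)"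
    unfolding p_def q_def by (simp add: algebra_simps)
  have e3: "(c-(a+b))*q + (a*b-(a+b)*c)*p + a*b*c = (1-t)*((c-(a+b))*q1 + (a*b-(a+b)*c)*p1 + a*b*c) + t*((c-(a+b))*q2 + (a*b-(a+b)*c)*p2 + a*b*c)"
    unfolding p_def q_def by (simp add: algebra_simps)
  have e4: "(a*b-(a+b)*c)*q + a*b*c*p = (1-t)*((a*b-(a+b)*c)*q1 + a*b*c*p1) + t*((a*b-(a+b)*c)*q2 + a*b*c*p2)"
    unfolding p_def q_def by (simp add: algebra_simps)
  have e5: "a*b*c*q = (1-t)*(a*b*c*q1) + t*(a*b*c*q2)"
    unfolding q_def by (simp add: algebra_simps)
  show ?thesis using assms(1,2) unfolding p_def[symmetric] q_def[symmetric] signs5_def cf5_def prod.case e1 e2 e3 e4 e5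
    using comb_pos[OF _ _ assms(3,4)] comb_neg[OF _ _ assms(3,4)] by blast
qed

lemma signs4_comb:
  assumes "signs4 (cf4 a b p1 q1)" "signs4 (cf4 a b p2 q2)" "0\<le>t" "t\<le>1"
  shows "signs4 (cf4 a b ((1-t)*p1+t*p2) ((1-t)*q1+t*q2))"
proof -
  define p where "p = (1-t)*p1+t*p2"
  define q where "q = (1-t)*q1+t*q2"
  have e1: "p - (a+b) = (1-t)*(p1 - (a+b)) + t*(p2 - (a+b))"
    unfolding p_def by (simp add: algebra_simps)
  have e2: "q - (a+b)*p + a*b = (1-t)*(q1 - (a+b)*p1 + a*b) + t*(q2 - (a+b)*p2 + a*b)"
    unfolding p_def q_def by (simp add: algebra_simps)
  have e3: "a*b*p - (a+b)*q = (1-t)*(a*b*p1 - (a+b)*q1) + t*(a*b*p2 - (a+b)*q2)"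
    unfolding p_def q_def by (simp add: algebra_simps)
  have e4: "a*b*q = (1-t)*(a*b*q1) + t*(a*b*q2)"
    unfolding q_def by (simp add: algebra_simps)
  show ?thesis using assms(1,2) unfolding p_def[symmetric] q_def[symmetric] signs4_def cf4_def prod.case e1 e2 e3 e4
    using comb_pos[OF _ _ assms(3,4)] comb_neg[OF _ _ assms(3,4)] by blast
qed

lemma core5:
  assumes "0<a" "a<b" "0<c"
  shows "signs5 (cf5 a b c (-c) (c^2))"
proof -
  have "cf5 a b c (-c) (c^2) = (-(a+b), a*b, c^3, -((a+b)*c^3), a*b*c^3)"
    unfolding cf5_def by (simp add: algebra_simps power2_eq_square power3_eq_cube)
  then show ?thesis unfolding signs5_def using assms by simp
qed

lemma core4:
  assumes "0<a" "a<b" "0<q"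
  shows "signs4 (cf4 a b 0 q)"
proof -
  have "cf4 a b 0 q = (-(a+b), q + a*b, -((a+b)*q), a*b*q)"
    unfolding cf4_def by (simp add: algebra_simps)
  moreover have "0 < a*b" using assms by simp
  ultimately show ?thesis unfolding signs4_def using assms by (simp add: add_pos_pos)
qed


lemma connected_core:
  fixes S K :: "'a::topological_space set"
  assumes "connected K" "K \<noteq> {}" "K \<subseteq> S"
    and "\<And>y. y \<in> S \<Longrightarrow> \<exists>C. connected C \<and> C \<subseteq> S \<and> y \<in> C \<and> C \<inter> K \<noteq> {}"
  shows "connected S"
proof -
  define G where "G = {C. connected C \<and> C \<subseteq> S \<and> C \<inter> K \<noteq> {}}"
  define F where "F = insert K ((\<lambda>C. C \<union> K) ` G)"
  have cF: "connected s" if "s \<in> F" for s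
  proof -
    from that consider "s = K" | C where "C \<in> G" "s = C \<union> K" unfolding F_def by auto
    then show "connected s"
    proof cases
      case 1 then show ?thesis using assms(1) by simp
    next
      case 2
      have "connected C" "C \<inter> K \<noteq> {}" using 2(1) unfolding G_def by auto
      then show ?thesis unfolding 2(2) using assms(1) by (intro connected_Un) auto
    qed
  qed
  have iF: "K \<subseteq> \<Inter>F" unfolding F_def by auto
  have SU: "S \<subseteq> \<Union>F"
  proof
    fix y assume yS: "y \<in> S"
    obtain C where C: "connected C" "C \<subseteq> S" "y \<in> C" "C \<inter> K \<noteq> {}"
      using assms(4)[OF yS] by (elim exE conjE)
    then have "C \<in> G" unfolding G_def by simp
    then have "C \<union> K \<in> F" unfolding F_def by (intro insertI2 imageI)
    then show "y \<in> \<Union>F" using C(3) by (intro UnionI[of "C \<union> K"]) auto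
  qed
  have US: "\<Union>F \<subseteq> S" unfolding F_def G_def using assms(3) by auto
  have "\<Inter>F \<noteq> {}" using iF assms(2) by blast
  then have "connected (\<Union>F)" by (intro connected_Union cF)
  moreover have "S = \<Union>F" using SU US by (rule subset_antisym)
  ultimately show ?thesis by simp
qed

lemma conn5: "connected {(a4::real, a3::real, a2::real, a1::real, a0::real).
             [:a0, a1, a2, a3, a4, 1:] \<in> A_set 5 (sigma_bullet 5) 2 1}"
  (is "connected ?S")
proof -
  define D where "D = {0::real<..} \<times> {0::real<..} \<times> {0::real<..}"
  define f where "f = (\<lambda>x::real\<times>real\<times>real. cf5 (fst x) (fst x + fst (snd x)) (snd (snd x))
                          (- snd (snd x)) ((snd (snd x))^2))"
  define K where "K = f ` D"
  have Kc: "connected K" unfolding K_def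
  proof (rule connected_continuous_image)
    show "continuous_on D f" unfolding f_def cf5_def by (intro continuous_intros)
    show "connected D" unfolding D_def by (intro connected_Times connected_Ioi)
  qed
  have Kne: "K \<noteq> {}" unfolding K_def D_def by auto
  have KS: "K \<subseteq> ?S"
  proof
    fix y assume "y \<in> K"
    then obtain a d c where "y = f (a,d,c)" "0<a" "0<d" "0<c" unfolding K_def D_def by auto
    then have yy: "y = cf5 a (a+d) c (-c) (c^2)" and pos: "0<a" "a < a+d" "0<c" unfolding f_def by auto
    have d2: "(-c)^2 < 4*c^2" using pos by simp
    show "y \<in> ?S" unfolding yy by (rule easy5[OF pos d2 core5[OF pos]])
  qed
  have step: "\<exists>C. connected C \<and> C \<subseteq> ?S \<and> y \<in> C \<and> C \<inter> K \<noteq> {}" if yS: "y \<in> ?S" for y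
  proof -
    obtain a4 a3 a2 a1 a0 where y: "y = (a4,a3,a2,a1,a0)" by (cases y)
    have PA: "[:a0,a1,a2,a3,a4,1:] \<in> A_set 5 (sigma_bullet 5) 2 1" using yS unfolding y by simp
    obtain a b c p q where pr: "0<a" "a<b" "0<c" "p^2 < 4*q" and yc0: "(a4,a3,a2,a1,a0) = cf5 a b c p q"
      using hard5[OF PA] by blast
    have yc: "y = cf5 a b c p q" using yc0 y by simp
    have "\<forall>j\<le>5. sgn (coeff [:a0,a1,a2,a3,a4,1:] j) = sigma_bullet 5 j" using PA unfolding A_set_def by blast
    then have sy: "signs5 y" unfolding y signs5_def sgn5 by simp
    define g where "g = (\<lambda>t. cf5 a b c ((1-t)*p + t*(-c)) ((1-t)*q + t*(c^2)))"
    define C where "C = g ` {0..1}"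
    have Cc: "connected C" unfolding C_def
      by (rule connected_continuous_image) (auto simp: g_def cf5_def intro!: continuous_intros)
    have CS: "C \<subseteq> ?S"
    proof
      fix z assume "z \<in> C"
      then obtain t where t: "0 \<le> t" "t \<le> 1" "z = g t" unfolding C_def by auto
      have d2: "(-c)^2 < 4*c^2" using pr by simp
      have s0: "signs5 (cf5 a b c p q)" using sy yc by simp
      have sg: "signs5 (g t)" unfolding g_def
        by (rule signs5_comb[OF s0 core5[OF pr(1-3)] t(1,2)])
      have dg: "((1-t)*p + t*(-c))^2 < 4*((1-t)*q + t*(c^2))"
        by (rule disc_comb[OF pr(4) d2 t(1,2)])
      show "z \<in> ?S" unfolding t(3) g_def by (rule easy5[OF pr(1-3) dg sg[unfolded g_def]])
    qed
    have yC: "y \<in> C" unfolding C_def yc g_def by (rule image_eqI[of _ _ 0]) auto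
    have "g 1 = f (a, b-a, c)" unfolding f_def g_def by simp
    moreover have "(a, b-a, c) \<in> D" unfolding D_def using pr by auto
    ultimately have "g 1 \<in> K" unfolding K_def by blast
    moreover have "g 1 \<in> C" unfolding C_def by auto
    ultimately have "C \<inter> K \<noteq> {}" by blast
    then show ?thesis using Cc CS yC by blast
  qed
  show ?thesis by (rule connected_core[OF Kc Kne KS step])
qed

lemma conn4: "connected {(a3::real, a2::real, a1::real, a0::real).
             [:a0, a1, a2, a3, 1:] \<in> A_set 4 (sigma_bullet 4) 2 0}"
  (is "connected ?S")
proof -
  define D where "D = {0::real<..} \<times> {0::real<..} \<times> {0::real<..}"
  define f where "f = (\<lambda>x::real\<times>real\<times>real. cf4 (fst x) (fst x + fst (snd x)) 0 (snd (snd x)))"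
  define K where "K = f ` D"
  have Kc: "connected K" unfolding K_def
  proof (rule connected_continuous_image)
    show "continuous_on D f" unfolding f_def cf4_def by (intro continuous_intros)
    show "connected D" unfolding D_def by (intro connected_Times connected_Ioi)
  qed
  have Kne: "K \<noteq> {}" unfolding K_def D_def by auto
  have KS: "K \<subseteq> ?S"
  proof
    fix y assume "y \<in> K"
    then obtain a d q where "y = f (a,d,q)" "0<a" "0<d" "0<q" unfolding K_def D_def by auto
    then have yy: "y = cf4 a (a+d) 0 q" and pos: "0<a" "a < a+d" "0<q" unfolding f_def by auto
    have d2: "(0::real)^2 < 4*q" using pos by simp
    show "y \<in> ?S" unfolding yy by (rule easy4[OF pos(1,2) d2 core4[OF pos]])
  qed
  have step: "\<exists>C. connected C \<and> C \<subseteq> ?S \<and> y \<in> C \<and> C \<inter> K \<noteq> {}" if yS: "y \<in> ?S" for y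
  proof -
    obtain a3 a2 a1 a0 where y: "y = (a3,a2,a1,a0)" by (cases y)
    have PA: "[:a0,a1,a2,a3,1:] \<in> A_set 4 (sigma_bullet 4) 2 0" using yS unfolding y by simp
    obtain a b p q where pr: "0<a" "a<b" "p^2 < 4*q" and yc0: "(a3,a2,a1,a0) = cf4 a b p q"
      using hard4[OF PA] by blast
    have yc: "y = cf4 a b p q" using yc0 y by simp
    have "\<forall>j\<le>4. sgn (coeff [:a0,a1,a2,a3,1:] j) = sigma_bullet 4 j" using PA unfolding A_set_def by blast
    then have sy: "signs4 y" unfolding y signs4_def sgn4 by simp
    have qpos: "0 < q" using pr(3) by (metis le_less_trans mult_pos_pos zero_le_power2 zero_less_numeral
         mult_less_cancel_left_pos mult_zero_right)
    define g where "g = (\<lambda>t. cf4 a b ((1-t)*p + t*0) ((1-t)*q + t*q))"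
    define C where "C = g ` {0..1}"
    have Cc: "connected C" unfolding C_def
      by (rule connected_continuous_image) (auto simp: g_def cf4_def intro!: continuous_intros)
    have CS: "C \<subseteq> ?S"
    proof
      fix z assume "z \<in> C"
      then obtain t where t: "0 \<le> t" "t \<le> 1" "z = g t" unfolding C_def by auto
      have d2: "(0::real)^2 < 4*q" using qpos by simp
      have s0: "signs4 (cf4 a b p q)" using sy yc by simp
      have sg: "signs4 (g t)" unfolding g_def
        by (rule signs4_comb[OF s0 core4[OF pr(1,2) qpos] t(1,2)])
      have dg: "((1-t)*p + t*0)^2 < 4*((1-t)*q + t*q)"
        by (rule disc_comb[OF pr(3) d2 t(1,2)])
      show "z \<in> ?S" unfolding t(3) g_def by (rule easy4[OF pr(1,2) dg sg[unfolded g_def]])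
    qed
    have yC: "y \<in> C" unfolding C_def yc g_def by (rule image_eqI[of _ _ 0]) auto
    have "g 1 = f (a, b-a, q)" unfolding f_def g_def by simp
    moreover have "(a, b-a, q) \<in> D" unfolding D_def using pr qpos by auto
    ultimately have "g 1 \<in> K" unfolding K_def by blast
    moreover have "g 1 \<in> C" unfolding C_def by auto
    ultimately have "C \<inter> K \<noteq> {}" by blast
    then show ?thesis using Cc CS yC by blast
  qed
  show ?thesis by (rule connected_core[OF Kc Kne KS step])
qed

theorem theorem1:
  shows "connected {(a3::real, a2::real, a1::real, a0::real).
             [:a0, a1, a2, a3, 1:] \<in> A_set 4 (sigma_bullet 4) 2 0}
       \<and> connected {(a4::real, a3::real, a2::real, a1::real, a0::real).
             [:a0, a1, a2, a3, a4, 1:] \<in> A_set 5 (sigma_bullet 5) 2 1}"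
  using conn4 conn5 by (rule conjI)

end
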